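(* Let $V^*=V\cup V^{\mathrm{abs}}$ be a finite set and $\{\eta(t),t\ge0\}$ a consistent configuration process on $V^*$ with generator $\mathcal L^{\mathrm{abs}}=\mathcal L+\mathcal H$. Let $\mathbf x=(x_1,\dots,x_n)\in(V^* )^n$. Then for all $m\in\{1,\dots,n-1\}$ and all $\zeta\in\Omega^{\mathrm{abs}}_m$, $$\mathbb E_{\phi(\mathbf x)}[F(\zeta,\eta(\infty))]=\sum_{1\le i_1<\dots<i_m\le n}\mathbb P_{\phi(x_{i_1},\dots,x_{i_m})}\big(\eta(\infty)=\zeta\big).$$
   Context: $V^{\mathrm{abs}}=V^*\setminus V$ is the set of absorbing sites, with rates $r(i,j)\ge0$ for $i\in V$, $j\in V^{\mathrm{abs}}$. $\mathcal L$ is the generator of a configuration process on $V$ (finite configurations with single-site space $\Lambda\subseteq\mathbb N_0$), acting only on $(\eta_i)_{i\in V}$, and $\mathcal Hf(\eta)=\sum_{i\in V,j\in V^{\mathrm{abs}}}r(i,j)\eta_i[f(\eta-\delta_i+\delta_j)-f(\eta)]$. Consistency means $[\mathcal L^{\mathrm{abs}},\mathcal A]=0$ with $\mathcal Af(\eta)=\sum_{x\in V^*}\eta_xf(\eta-\delta_x)$ (terms with $\eta_x=0$ vanish). $\phi(\mathbf y)=\sum_i\delta_{y_i}$. $\Omega^{\mathrm{abs}}_m$ is the set of configurations $\zeta\in\mathbb N_0^{V^{\mathrm{abs}}}$ with $\sum\zeta_j=m$, viewed as configurations on $V^*$ vanishing on $V$. $F(\zeta,\eta)=\prod_{j}\binom{\eta_j}{\zeta_j}$.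 $\mathbb P_\eta(\eta(\infty)=\zeta):=\lim_{t\to\infty}\mathbb P_\eta(\eta(t)=\zeta)$ and $\mathbb E_\eta[f(\eta(\infty))]:=\lim_{t\to\infty}\mathbb E_\eta[f(\eta(t))]$. *)

theory Defs
  imports Complex_Main
begin

text \<open>Sites have type 'v. The finite site set is Vs (= V^*), V \<subseteq> Vs,
  absorbing sites are Vs - V. Configurations are functions 'v \<Rightarrow> nat
  vanishing outside the relevant site set.\<close>

definition config_space :: "'v set \<Rightarrow> nat \<Rightarrow> ('v \<Rightarrow> nat) set" where
  "config_space S N = {\<eta>. (\<forall>x. x \<notin> S \<longrightarrow> \<eta> x = 0) \<and> sum \<eta> S = N}"

definition state_space :: "'v set \<Rightarrow> 'v set \<Rightarrow> nat set \<Rightarrow> ('v \<Rightarrow> nat) set" where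
  "state_space V Vs \<Lambda> = {\<eta>. (\<forall>x. x \<notin> Vs \<longrightarrow> \<eta> x = 0) \<and> (\<forall>i\<in>V. \<eta> i \<in> \<Lambda>)}"

definition restrV :: "'v set \<Rightarrow> ('v \<Rightarrow> nat) \<Rightarrow> ('v \<Rightarrow> nat)" where
  "restrV V \<eta> = (\<lambda>x. if x \<in> V then \<eta> x else 0)"

definition genL :: "'v set \<Rightarrow> (('v \<Rightarrow> nat) \<Rightarrow> ('v \<Rightarrow> nat) \<Rightarrow> real)
    \<Rightarrow> (('v \<Rightarrow> nat) \<Rightarrow> real) \<Rightarrow> ('v \<Rightarrow> nat) \<Rightarrow> real" where
  "genL V c f \<eta> = (\<Sum>\<xi>'\<in>config_space V (sum \<eta> V).
      c (restrV V \<eta>) \<xi>' * (f (\<lambda>x. if x \<in> V then \<xi>' x else \<eta> x) - f \<eta>))"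

definition genH :: "'v set \<Rightarrow> 'v set \<Rightarrow> ('v \<Rightarrow> 'v \<Rightarrow> real)
    \<Rightarrow> (('v \<Rightarrow> nat) \<Rightarrow> real) \<Rightarrow> ('v \<Rightarrow> nat) \<Rightarrow> real" where
  "genH V Vs r f \<eta> = (\<Sum>i\<in>V. \<Sum>j\<in>Vs - V.
      r i j * real (\<eta> i) * (f (\<eta>(i := \<eta> i - 1, j := \<eta> j + 1)) - f \<eta>))"

definition genAbs :: "'v set \<Rightarrow> 'v set \<Rightarrow> (('v \<Rightarrow> nat) \<Rightarrow> ('v \<Rightarrow> nat) \<Rightarrow> real)
    \<Rightarrow> ('v \<Rightarrow> 'v \<Rightarrow> real) \<Rightarrow> (('v \<Rightarrow> nat) \<Rightarrow> real) \<Rightarrow> ('v \<Rightarrow> nat) \<Rightarrow> real" where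
  "genAbs V Vs c r f \<eta> = genL V c f \<eta> + genH V Vs r f \<eta>"

definition annih :: "'v set \<Rightarrow> (('v \<Rightarrow> nat) \<Rightarrow> real) \<Rightarrow> ('v \<Rightarrow> nat) \<Rightarrow> real" where
  "annih Vs f \<eta> = (\<Sum>x\<in>Vs. real (\<eta> x) * f (\<eta>(x := \<eta> x - 1)))"

definition rate :: "'v set \<Rightarrow> 'v set \<Rightarrow> (('v \<Rightarrow> nat) \<Rightarrow> ('v \<Rightarrow> nat) \<Rightarrow> real)
    \<Rightarrow> ('v \<Rightarrow> 'v \<Rightarrow> real) \<Rightarrow> ('v \<Rightarrow> nat) \<Rightarrow> ('v \<Rightarrow> nat) \<Rightarrow> real" where
  "rate V Vs c r \<eta> \<eta>' = genAbs V Vs c r (\<lambda>\<zeta>. if \<zeta> = \<eta>' then 1 else 0) \<eta>"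

fun Qpow :: "'v set \<Rightarrow> 'v set \<Rightarrow> (('v \<Rightarrow> nat) \<Rightarrow> ('v \<Rightarrow> nat) \<Rightarrow> real)
    \<Rightarrow> ('v \<Rightarrow> 'v \<Rightarrow> real) \<Rightarrow> nat \<Rightarrow> ('v \<Rightarrow> nat) \<Rightarrow> ('v \<Rightarrow> nat) \<Rightarrow> real" where
  "Qpow V Vs c r 0 \<eta> \<xi> = (if \<eta> = \<xi> then 1 else 0)"
| "Qpow V Vs c r (Suc k) \<eta> \<xi> =
     (\<Sum>\<zeta>\<in>config_space Vs (sum \<eta> Vs). rate V Vs c r \<eta> \<zeta> * Qpow V Vs c r k \<zeta> \<xi>)"

text \<open>Transition probabilities P_\<eta>(\<eta>(t) = \<xi>) = exp(tQ)(\<eta>,\<xi>).\<close>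
definition trans_prob :: "'v set \<Rightarrow> 'v set \<Rightarrow> (('v \<Rightarrow> nat) \<Rightarrow> ('v \<Rightarrow> nat) \<Rightarrow> real)
    \<Rightarrow> ('v \<Rightarrow> 'v \<Rightarrow> real) \<Rightarrow> real \<Rightarrow> ('v \<Rightarrow> nat) \<Rightarrow> ('v \<Rightarrow> nat) \<Rightarrow> real" where
  "trans_prob V Vs c r t \<eta> \<xi> = (\<Sum>k. t ^ k / fact k * Qpow V Vs c r k \<eta> \<xi>)"

definition expect_t :: "'v set \<Rightarrow> 'v set \<Rightarrow> (('v \<Rightarrow> nat) \<Rightarrow> ('v \<Rightarrow> nat) \<Rightarrow> real)
    \<Rightarrow> ('v \<Rightarrow> 'v \<Rightarrow> real) \<Rightarrow> real \<Rightarrow> ('v \<Rightarrow> nat) \<Rightarrow> (('v \<Rightarrow> nat) \<Rightarrow> real) \<Rightarrow> real" where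
  "expect_t V Vs c r t \<eta> f =
     (\<Sum>\<xi>\<in>config_space Vs (sum \<eta> Vs). trans_prob V Vs c r t \<eta> \<xi> * f \<xi>)"

definition prob_inf :: "'v set \<Rightarrow> 'v set \<Rightarrow> (('v \<Rightarrow> nat) \<Rightarrow> ('v \<Rightarrow> nat) \<Rightarrow> real)
    \<Rightarrow> ('v \<Rightarrow> 'v \<Rightarrow> real) \<Rightarrow> ('v \<Rightarrow> nat) \<Rightarrow> ('v \<Rightarrow> nat) \<Rightarrow> real" where
  "prob_inf V Vs c r \<eta> \<zeta> = Lim at_top (\<lambda>t. trans_prob V Vs c r t \<eta> \<zeta>)"

definition expect_inf :: "'v set \<Rightarrow> 'v set \<Rightarrow> (('v \<Rightarrow> nat) \<Rightarrow> ('v \<Rightarrow> nat) \<Rightarrow> real)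
    \<Rightarrow> ('v \<Rightarrow> 'v \<Rightarrow> real) \<Rightarrow> ('v \<Rightarrow> nat) \<Rightarrow> (('v \<Rightarrow> nat) \<Rightarrow> real) \<Rightarrow> real" where
  "expect_inf V Vs c r \<eta> f = Lim at_top (\<lambda>t. expect_t V Vs c r t \<eta> f)"

definition phi :: "'v list \<Rightarrow> ('v \<Rightarrow> nat)" where
  "phi ys = (\<lambda>v. length (filter (\<lambda>y. y = v) ys))"

definition Fdual :: "'v set \<Rightarrow> ('v \<Rightarrow> nat) \<Rightarrow> ('v \<Rightarrow> nat) \<Rightarrow> real" where
  "Fdual Vabs \<zeta> \<eta> = (\<Prod>j\<in>Vabs. real (\<eta> j choose \<zeta> j))"

definition consistent :: "'v set \<Rightarrow> 'v set \<Rightarrow> nat set \<Rightarrow> (('v \<Rightarrow> nat) \<Rightarrow> ('v \<Rightarrow> nat) \<Rightarrow> real)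
    \<Rightarrow> ('v \<Rightarrow> 'v \<Rightarrow> real) \<Rightarrow> bool" where
  "consistent V Vs \<Lambda> c r \<longleftrightarrow>
     (\<forall>f \<eta>. \<eta> \<in> state_space V Vs \<Lambda> \<longrightarrow>
        genAbs V Vs c r (annih Vs f) \<eta> = annih Vs (genAbs V Vs c r f) \<eta>)"

end

theory Submission
  imports Defs
begin

fun mpow :: "('s \<Rightarrow> 's \<Rightarrow> real) \<Rightarrow> 's set \<Rightarrow> nat \<Rightarrow> 's \<Rightarrow> 's \<Rightarrow> real" where
  "mpow Q S 0 a b = (if a = b then 1 else 0)"
| "mpow Q S (Suc k) a b = (\<Sum>z\<in>S. Q a z * mpow Q S k z b)"

definition bnd :: "('s \<Rightarrow> 's \<Rightarrow> real) \<Rightarrow> 's set \<Rightarrow> real" where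
  "bnd Q S = (\<Sum>a\<in>S. \<Sum>b\<in>S. \<bar>Q a b\<bar>)"

lemma bnd_nonneg: "0 \<le> bnd Q S"
  unfolding bnd_def by (intro sum_nonneg) auto

lemma bnd_row: "finite S \<Longrightarrow> a \<in> S \<Longrightarrow> (\<Sum>b\<in>S. \<bar>Q a b\<bar>) \<le> bnd Q S"
  unfolding bnd_def by (rule member_le_sum[where f="\<lambda>a. \<Sum>b\<in>S. \<bar>Q a b\<bar>"]) (auto intro: sum_nonneg)

lemma mpow_bound:
  assumes "finite S" "a \<in> S"
  shows "\<bar>mpow Q S k a b\<bar> \<le> bnd Q S ^ k"
  using assms(2)
proof (induction k arbitrary: a)
  case 0 then show ?case by simp
next
  case (Suc k)
  have "\<bar>mpow Q S (Suc k) a b\<bar> \<le> (\<Sum>z\<in>S. \<bar>Q a z\<bar> * bnd Q S ^ k)"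
    unfolding mpow.simps
    by (rule order_trans[OF sum_abs]) (auto intro!: sum_mono mult_left_mono Suc.IH simp: abs_mult)
  also have "\<dots> = (\<Sum>z\<in>S. \<bar>Q a z\<bar>) * bnd Q S ^ k" by (simp add: sum_distrib_right)
  also have "\<dots> \<le> bnd Q S * bnd Q S ^ k"
    by (rule mult_right_mono[OF bnd_row[OF assms(1) Suc.prems]]) (simp add: bnd_nonneg)
  finally show ?case by simp
qed

lemma mpow_summable_abs:
  assumes "finite S" "a \<in> S"
  shows "summable (\<lambda>k. \<bar>t ^ k / fact k * mpow Q S k a b\<bar>)"
proof (rule summable_comparison_test[OF _ summable_exp[of "\<bar>t\<bar> * bnd Q S"]])
  show "\<exists>N. \<forall>n\<ge>N. norm \<bar>t ^ n / fact n * mpow Q S n a b\<bar> \<le> inverse (fact n) * (\<bar>t\<bar> * bnd Q S) ^ n"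
  proof (intro exI allI impI)
    fix n :: nat
    have "\<bar>t ^ n / fact n * mpow Q S n a b\<bar> = \<bar>t\<bar> ^ n / fact n * \<bar>mpow Q S n a b\<bar>"
      by (simp add: abs_mult power_abs)
    also have "\<dots> \<le> \<bar>t\<bar> ^ n / fact n * bnd Q S ^ n"
      by (rule mult_left_mono[OF mpow_bound[OF assms]]) simp
    finally show "norm \<bar>t ^ n / fact n * mpow Q S n a b\<bar> \<le> inverse (fact n) * (\<bar>t\<bar> * bnd Q S) ^ n"
      by (simp add: power_mult_distrib field_simps)
  qed
qed

lemma mpow_summable:
  assumes "finite S" "a \<in> S"
  shows "summable (\<lambda>k. t ^ k / fact k * mpow Q S k a b)"
  using summable_rabs_cancel[OF mpow_summable_abs[OF assms]] .

lemma mpow_right: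
  assumes "finite S" "a \<in> S" "b \<in> S"
  shows "mpow Q S (Suc k) a b = (\<Sum>z\<in>S. mpow Q S k a z * Q z b)"
  using assms(2)
proof (induction k arbitrary: a)
  case 0
  have "(\<Sum>z\<in>S. Q a z * (if z = b then 1 else 0)) = Q a b"
    using assms by (simp add: sum.delta' if_distrib[of "\<lambda>x. Q a _ * x"] cong: if_cong)
  moreover have "(\<Sum>z\<in>S. (if a = z then 1 else 0) * Q z b) = Q a b"
    using 0 assms by (simp add: sum.delta if_distrib[of "\<lambda>x. x * Q _ b"] cong: if_cong)
  ultimately show ?case by simp
next
  case (Suc k)
  have "mpow Q S (Suc (Suc k)) a b = (\<Sum>y\<in>S. Q a y * mpow Q S (Suc k) y b)"
    by (rule mpow.simps(2))
  also have "\<dots> = (\<Sum>y\<in>S. Q a y * (\<Sum>z\<in>S. mpow Q S k y z * Q z b))"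
    by (rule sum.cong[OF refl]) (simp only: Suc.IH)
  also have "\<dots> = (\<Sum>z\<in>S. (\<Sum>y\<in>S. Q a y * mpow Q S k y z) * Q z b)"
    by (simp only: sum_distrib_left sum_distrib_right mult.assoc) (rule sum.swap)
  finally show ?case by simp
qed

lemma mpow_rowsum:
  assumes "finite S" "a \<in> S" "\<And>x. x \<in> S \<Longrightarrow> (\<Sum>y\<in>S. Q x y) = 0"
  shows "(\<Sum>b\<in>S. mpow Q S k a b) = (if k = 0 then 1 else 0)"
  using assms(2)
proof (induction k arbitrary: a)
  case 0 then show ?case using assms by (simp add: sum.delta)
next
  case (Suc k)
  have "(\<Sum>b\<in>S. mpow Q S (Suc k) a b) = (\<Sum>z\<in>S. Q a z * (\<Sum>b\<in>S. mpow Q S k z b))"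
    by (simp only: mpow.simps(2) sum_distrib_left) (rule sum.swap)
  also have "\<dots> = (\<Sum>z\<in>S. Q a z * (if k = 0 then 1 else 0))"
    by (intro sum.cong refl) (simp add: Suc.IH)
  also have "\<dots> = 0" using assms(3)[OF Suc.prems] by (simp add: sum_distrib_right[symmetric])
  finally show ?case by simp
qed

lemma binom_step:
  fixes a :: "nat \<Rightarrow> real"
  shows "(\<Sum>i\<le>k. real (k choose i) * l ^ (k - i) * a (Suc i)) + l * (\<Sum>i\<le>k. real (k choose i) * l ^ (k - i) * a i)
       = (\<Sum>i\<le>Suc k. real (Suc k choose i) * l ^ (Suc k - i) * a i)"
proof -
  have A: "l * (\<Sum>i\<le>k. real (k choose i) * l ^ (k - i) * a i) = (\<Sum>i\<le>k. real (k choose i) * l ^ (Suc k - i) * a i)"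
    by (simp add: sum_distrib_left Suc_diff_le mult_ac)
  also have "\<dots> = (\<Sum>i\<le>Suc k. real (k choose i) * l ^ (Suc k - i) * a i)"
    by simp
  also have "\<dots> = l ^ Suc k * a 0 + (\<Sum>j\<le>k. real (k choose Suc j) * l ^ (k - j) * a (Suc j))"
    by (subst sum.atMost_Suc_shift) simp
  finally have A: "l * (\<Sum>i\<le>k. real (k choose i) * l ^ (k - i) * a i) = l ^ Suc k * a 0 + (\<Sum>j\<le>k. real (k choose Suc j) * l ^ (k - j) * a (Suc j))" .
  have B: "(\<Sum>i\<le>Suc k. real (Suc k choose i) * l ^ (Suc k - i) * a i)
       = l ^ Suc k * a 0 + ((\<Sum>j\<le>k. real (k choose j) * l ^ (k - j) * a (Suc j)) + (\<Sum>j\<le>k. real (k choose Suc j) * l ^ (k - j) * a (Suc j)))"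
    by (subst sum.atMost_Suc_shift) (simp add: sum.distrib[symmetric] algebra_simps)
  show ?thesis unfolding A B by simp
qed

lemma mpow_binom:
  assumes "finite S" "a \<in> S"
  shows "mpow (\<lambda>x y. Q x y + (if x = y then l else 0)) S k a b = (\<Sum>i\<le>k. real (k choose i) * l ^ (k - i) * mpow Q S i a b)"
  using assms(2)
proof (induction k arbitrary: a)
  case 0 then show ?case by simp
next
  case (Suc k)
  let ?R = "\<lambda>x y. Q x y + (if x = y then l else 0)"
  have "mpow ?R S (Suc k) a b = (\<Sum>z\<in>S. ?R a z * mpow ?R S k z b)" by (rule mpow.simps(2))
  also have "\<dots> = (\<Sum>z\<in>S. ?R a z * (\<Sum>i\<le>k. real (k choose i) * l ^ (k - i) * mpow Q S i z b))"
    by (rule sum.cong[OF refl]) (simp only: Suc.IH)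
  also have "\<dots> = (\<Sum>z\<in>S. Q a z * (\<Sum>i\<le>k. real (k choose i) * l ^ (k - i) * mpow Q S i z b))
      + (\<Sum>z\<in>S. (if a = z then l else 0) * (\<Sum>i\<le>k. real (k choose i) * l ^ (k - i) * mpow Q S i z b))"
    by (simp add: distrib_right sum.distrib)
  also have "(\<Sum>z\<in>S. (if a = z then l else 0) * (\<Sum>i\<le>k. real (k choose i) * l ^ (k - i) * mpow Q S i z b))
      = l * (\<Sum>i\<le>k. real (k choose i) * l ^ (k - i) * mpow Q S i a b)"
    using Suc.prems assms(1) by (simp add: sum.delta if_distrib[of "\<lambda>x. x * _"] cong: if_cong)
  also have "(\<Sum>z\<in>S. Q a z * (\<Sum>i\<le>k. real (k choose i) * l ^ (k - i) * mpow Q S i z b))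
      = (\<Sum>z\<in>S. \<Sum>i\<le>k. real (k choose i) * l ^ (k - i) * (Q a z * mpow Q S i z b))"
    by (simp add: sum_distrib_left mult_ac)
  also have "\<dots> = (\<Sum>i\<le>k. \<Sum>z\<in>S. real (k choose i) * l ^ (k - i) * (Q a z * mpow Q S i z b))"
    by (rule sum.swap)
  also have "\<dots> = (\<Sum>i\<le>k. real (k choose i) * l ^ (k - i) * mpow Q S (Suc i) a b)"
    by (simp only: mpow.simps(2) sum_distrib_left)
  finally show ?case using binom_step[where k=k and a="\<lambda>i. mpow Q S i a b" and l=l] by simp
qed

lemma mpow_nonneg:
  assumes "finite S" "a \<in> S" "\<And>x y. x \<in> S \<Longrightarrow> y \<in> S \<Longrightarrow> 0 \<le> R x y"
  shows "0 \<le> mpow R S k a b"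
  using assms(2)
  by (induction k arbitrary: a) (auto intro!: sum_nonneg mult_nonneg_nonneg assms(3))

definition Pt :: "('s \<Rightarrow> 's \<Rightarrow> real) \<Rightarrow> 's set \<Rightarrow> real \<Rightarrow> 's \<Rightarrow> 's \<Rightarrow> real" where
  "Pt Q S t a b = (\<Sum>k. t ^ k / fact k * mpow Q S k a b)"

lemma Pt_shift:
  assumes "finite S" "a \<in> S"
  shows "exp (l * t) * Pt Q S t a b = Pt (\<lambda>x y. Q x y + (if x = y then l else 0)) S t a b"
proof -
  let ?R = "\<lambda>x y. Q x y + (if x = y then l else 0)"
  have e: "exp (l * t) = (\<Sum>k. (l * t) ^ k / fact k)"
    using exp_converges[of "l * t"] by (simp add: sums_iff divide_inverse mult.commute)
  have "(\<Sum>k. (l * t) ^ k / fact k) * Pt Q S t a b = Pt Q S t a b * (\<Sum>k. (l * t) ^ k / fact k)" by simp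
  also have "\<dots> = (\<Sum>k. \<Sum>i\<le>k. (t ^ i / fact i * mpow Q S i a b) * ((l * t) ^ (k - i) / fact (k - i)))"
    unfolding Pt_def
  proof (rule Cauchy_product)
    show "summable (\<lambda>k. norm (t ^ k / fact k * mpow Q S k a b))"
      using mpow_summable_abs[OF assms] by simp
    show "summable (\<lambda>k. norm ((l * t) ^ k / fact k))"
      using summable_exp[of "\<bar>l * t\<bar>"] by (simp add: power_abs divide_inverse mult.commute abs_mult)
  qed
  also have "\<dots> = (\<Sum>k. t ^ k / fact k * mpow ?R S k a b)"
  proof (rule suminf_cong)
    fix k :: nat
    have "(\<Sum>i\<le>k. (t ^ i / fact i * mpow Q S i a b) * ((l * t) ^ (k - i) / fact (k - i)))
        = (\<Sum>i\<le>k. t ^ k / fact k * (real (k choose i) * l ^ (k - i) * mpow Q S i a b))"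
    proof (rule sum.cong[OF refl])
      fix i assume "i \<in> {..k}"
      then have ik: "i \<le> k" by simp
      have tk: "t ^ k = t ^ i * t ^ (k - i)" using ik by (simp flip: power_add)
      show "(t ^ i / fact i * mpow Q S i a b) * ((l * t) ^ (k - i) / fact (k - i))
          = t ^ k / fact k * (real (k choose i) * l ^ (k - i) * mpow Q S i a b)"
        unfolding binomial_fact[OF ik] tk power_mult_distrib by (simp add: field_simps)
    qed
    also have "\<dots> = t ^ k / fact k * mpow ?R S k a b"
      by (simp add: mpow_binom[OF assms] sum_distrib_left)
    finally show "(\<Sum>i\<le>k. (t ^ i / fact i * mpow Q S i a b) * ((l * t) ^ (k - i) / fact (k - i)))
        = t ^ k / fact k * mpow ?R S k a b" .
  qed
  finally show ?thesis unfolding e Pt_def by simp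
qed

lemma Pt_nonneg:
  assumes "finite S" "a \<in> S" "0 \<le> t"
    and off: "\<And>x y. x \<in> S \<Longrightarrow> y \<in> S \<Longrightarrow> x \<noteq> y \<Longrightarrow> 0 \<le> Q x y"
  shows "0 \<le> Pt Q S t a b"
proof -
  let ?l = "bnd Q S"
  let ?R = "\<lambda>x y. Q x y + (if x = y then ?l else 0)"
  have Rnn: "0 \<le> ?R x y" if "x \<in> S" "y \<in> S" for x y
  proof (cases "x = y")
    case True
    have "\<bar>Q x x\<bar> \<le> (\<Sum>b\<in>S. \<bar>Q x b\<bar>)"
      using that assms(1) True by (intro member_le_sum) auto
    also have "\<dots> \<le> ?l" by (rule bnd_row[OF assms(1) that(1)])
    finally show ?thesis using True by simp
  next
    case False then show ?thesis using off[OF that] by simp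
  qed
  have "0 \<le> Pt ?R S t a b"
    unfolding Pt_def
    by (intro suminf_nonneg mpow_summable[OF assms(1,2)] mult_nonneg_nonneg divide_nonneg_pos
        mpow_nonneg[OF assms(1,2)] Rnn) (auto simp: assms(3))
  then have "0 \<le> exp (?l * t) * Pt Q S t a b" using Pt_shift[OF assms(1,2)] by simp
  then show ?thesis by (simp add: zero_le_mult_iff)
qed

lemma Pt_deriv:
  assumes "finite S" "a \<in> S" "b \<in> S"
  shows "((\<lambda>t. Pt Q S t a b) has_real_derivative (\<Sum>z\<in>S. Pt Q S t a z * Q z b)) (at t)"
proof -
  define c where "c k = mpow Q S k a b / fact k" for k
  have eq: "Pt Q S x a b = (\<Sum>k. c k * x ^ k)" for x
    unfolding Pt_def c_def by (simp add: mult_ac)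
  have sm: "summable (\<lambda>k. c k * y ^ k)" for y :: real
    using mpow_summable[OF assms(1,2), of y Q b] by (simp add: c_def mult_ac)
  have d: "((\<lambda>x. \<Sum>k. c k * x ^ k) has_real_derivative (\<Sum>k. diffs c k * t ^ k)) (at t)"
    by (rule termdiffs_strong_converges_everywhere[OF sm])
  have "(\<Sum>k. diffs c k * t ^ k) = (\<Sum>k. t ^ k / fact k * mpow Q S (Suc k) a b)"
    by (rule suminf_cong) (simp add: diffs_def c_def fact_Suc del: mpow.simps of_nat_Suc)
  also have "\<dots> = (\<Sum>k. \<Sum>z\<in>S. t ^ k / fact k * mpow Q S k a z * Q z b)"
    by (rule suminf_cong) (simp add: mpow_right[OF assms] sum_distrib_left mult_ac del: mpow.simps)
  also have "\<dots> = (\<Sum>z\<in>S. \<Sum>k. t ^ k / fact k * mpow Q S k a z * Q z b)"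
    by (rule suminf_sum) (intro summable_mult2 mpow_summable[OF assms(1,2)])
  also have "\<dots> = (\<Sum>z\<in>S. Pt Q S t a z * Q z b)"
    unfolding Pt_def by (intro sum.cong refl suminf_mult2[symmetric] mpow_summable[OF assms(1,2)])
  finally show ?thesis using d unfolding eq[abs_def] by simp
qed

lemma Pt_rowsum:
  assumes "finite S" "a \<in> S" "\<And>x. x \<in> S \<Longrightarrow> (\<Sum>y\<in>S. Q x y) = 0"
  shows "(\<Sum>b\<in>S. Pt Q S t a b) = 1"
proof -
  have "(\<Sum>b\<in>S. Pt Q S t a b) = (\<Sum>k. \<Sum>b\<in>S. t ^ k / fact k * mpow Q S k a b)"
    unfolding Pt_def by (rule suminf_sum[symmetric]) (rule mpow_summable[OF assms(1,2)])
  also have "\<dots> = (\<Sum>k. if k = 0 then 1 else 0)"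
    by (rule suminf_cong, subst sum_distrib_left[symmetric]) (simp add: mpow_rowsum[OF assms] del: mpow.simps)
  also have "\<dots> = 1" using sums_single[of 0 "\<lambda>_. 1::real"] by (simp add: sums_iff)
  finally show ?thesis .
qed

lemma Pt_limit:
  assumes fin: "finite S" and a: "a \<in> S" and b: "b \<in> S"
    and row: "\<And>x. x \<in> S \<Longrightarrow> (\<Sum>y\<in>S. Q x y) = 0"
    and off: "\<And>x y. x \<in> S \<Longrightarrow> y \<in> S \<Longrightarrow> x \<noteq> y \<Longrightarrow> 0 \<le> Q x y"
    and bb: "Q b b = 0"
  shows "\<exists>L. ((\<lambda>t. Pt Q S t a b) \<longlongrightarrow> L) at_top"
proof -
  let ?f = "\<lambda>t. Pt Q S t a b"
  have dnn: "0 \<le> (\<Sum>z\<in>S. Pt Q S t a z * Q z b)" if "0 \<le> t" for t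
  proof (rule sum_nonneg)
    fix z assume z: "z \<in> S"
    show "0 \<le> Pt Q S t a z * Q z b"
    proof (cases "z = b")
      case True then show ?thesis using bb by simp
    next
      case False then show ?thesis
        using Pt_nonneg[OF fin a that off] off[OF z b] by simp
    qed
  qed
  have mono: "?f s \<le> ?f t" if "0 \<le> s" "s \<le> t" for s t
  proof (rule DERIV_nonneg_imp_increasing_open[OF that(2)])
    fix x assume "s < x" "x < t"
    then show "\<exists>y. ((\<lambda>t. Pt Q S t a b) has_real_derivative y) (at x) \<and> 0 \<le> y"
      using Pt_deriv[OF fin a b, of Q x] dnn[of x] that by auto
  next
    show "continuous_on {s..t} ?f"
      using Pt_deriv[OF fin a b, of Q] by (intro continuous_at_imp_continuous_on ballI DERIV_isCont) blast
  qed
  have bnd1: "?f t \<le> 1" if "0 \<le> t" for t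
  proof -
    have "?f t \<le> (\<Sum>z\<in>S. Pt Q S t a z)"
      using fin b Pt_nonneg[OF fin a that off] by (intro member_le_sum) auto
    then show ?thesis using Pt_rowsum[OF fin a row] by simp
  qed
  have bdd: "bdd_above (?f ` {0..})"
    using bnd1 by (intro bdd_aboveI[of _ 1]) auto
  let ?L = "SUP t\<in>{0..}. ?f t"
  have "(?f \<longlongrightarrow> ?L) at_top"
  proof (rule increasing_tendsto)
    show "\<forall>\<^sub>F n in at_top. ?f n \<le> ?L"
      using eventually_ge_at_top[of "0::real"] by eventually_elim (intro cSUP_upper bdd, auto)
    fix x assume "x < ?L"
    then obtain t0 where t0: "t0 \<in> {0..}" "x < ?f t0"
      using less_cSUP_iff[OF _ bdd] by auto
    show "\<forall>\<^sub>F n in at_top. x < ?f n"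
      using eventually_ge_at_top[of t0] 
    proof eventually_elim
      case (elim n) then show ?case using t0 mono[of t0 n] by auto
    qed
  qed
  then show ?thesis by blast
qed

lemma phi_append: "phi (xs @ ys) = (\<lambda>v. phi xs v + phi ys v)"
  by (simp add: phi_def)

lemma phi_nths: "phi (nths xs I) v = card {i. i < length xs \<and> i \<in> I \<and> xs ! i = v}"
proof (induction xs rule: rev_induct)
  case Nil then show ?case by (simp add: phi_def)
next
  case (snoc x xs)
  have e: "{i. i < length (xs @ [x]) \<and> i \<in> I \<and> (xs @ [x]) ! i = v}
      = {i. i < length xs \<and> i \<in> I \<and> xs ! i = v} \<union> {i. i = length xs \<and> length xs \<in> I \<and> x = v}"
    by (auto simp: nth_append less_Suc_eq)
  have "card ({i. i < length xs \<and> i \<in> I \<and> xs ! i = v} \<union> {i. i = length xs \<and> length xs \<in> I \<and> x = v})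
      = card {i. i < length xs \<and> i \<in> I \<and> xs ! i = v} + card {i. i = length xs \<and> length xs \<in> I \<and> x = v}"
    by (rule card_Un_disjoint) auto
  moreover have "card {i. i = length xs \<and> length xs \<in> I \<and> x = v} = (if length xs \<in> I \<and> x = v then 1 else 0)"
    by auto
  moreover have "phi (nths (xs@[x]) I) v = phi (nths xs I) v + (if length xs \<in> I \<and> x = v then 1 else 0)"
    by (simp add: nths_append nths_singleton phi_def)
  ultimately show ?case using snoc.IH unfolding e by simp
qed

lemma sum_phi: "finite W \<Longrightarrow> set xs \<subseteq> W \<Longrightarrow> sum (phi xs) W = length xs"
proof (induction xs)
  case Nil then show ?case by (simp add: phi_def)
next
  case (Cons x xs)
  have "phi (x # xs) = (\<lambda>v. (if x = v then 1 else 0) + phi xs v)"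
    by (auto simp add: phi_def)
  then show ?case using Cons by (simp add: sum.distrib)
qed

lemma phi_outside: "v \<notin> set xs \<Longrightarrow> phi xs v = 0"
  by (simp add: phi_def filter_empty_conv) blast

lemma exists_phi:
  assumes "finite W" "\<And>x. x \<notin> W \<Longrightarrow> \<eta> x = 0"
  shows "\<exists>ys. phi ys = \<eta> \<and> set ys \<subseteq> W"
  using assms
proof (induction W arbitrary: \<eta> rule: finite_induct)
  case empty
  then have "\<eta> = (\<lambda>_. 0)" by auto
  then show ?case by (intro exI[of _ "[]"]) (simp add: phi_def)
next
  case (insert a F)
  have "\<And>x. x \<notin> F \<Longrightarrow> (\<eta>(a := 0)) x = 0" using insert.prems by auto
  then obtain ys where ys: "phi ys = \<eta>(a := 0)" "set ys \<subseteq> F"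
    using insert.IH[of "\<eta>(a := 0)"] by blast
  have "phi (replicate (\<eta> a) a @ ys) = \<eta>"
  proof
    fix v
    have r: "phi (replicate (\<eta> a) a) v = (if v = a then \<eta> a else 0)"
      by (auto simp: phi_def filter_replicate)
    show "phi (replicate (\<eta> a) a @ ys) v = \<eta> v"
      by (simp add: phi_append r ys(1))
  qed
  then show ?case using ys by (intro exI[of _ "replicate (\<eta> a) a @ ys"]) auto
qed

lemma phi_nths_remove:
  assumes "i \<in> I" "i < length xs"
  shows "phi (nths xs (I - {i})) = (phi (nths xs I))(xs ! i := phi (nths xs I) (xs ! i) - 1)"
proof
  fix v
  have fin: "finite {j. j < length xs \<and> j \<in> I \<and> xs ! j = v}" by simp
  have "{j. j < length xs \<and> j \<in> I - {i} \<and> xs ! j = v} = {j. j < length xs \<and> j \<in> I \<and> xs ! j = v} - {i}"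
    by auto
  then show "phi (nths xs (I - {i})) v = ((phi (nths xs I))(xs ! i := phi (nths xs I) (xs ! i) - 1)) v"
    using assms unfolding phi_nths by (auto simp: card_Diff_singleton_if)
qed

lemma annih_nths:
  assumes fin: "finite W" and xs: "set xs \<subseteq> W" and I: "I \<subseteq> {0..<length xs}"
  shows "annih W h (phi (nths xs I)) = (\<Sum>i\<in>I. h (phi (nths xs (I - {i}))))"
proof -
  let ?e = "phi (nths xs I)"
  have finI: "finite I" using I finite_subset by blast
  have img: "(\<lambda>i. xs ! i) ` I \<subseteq> W" using I xs nth_mem by fastforce
  have "(\<Sum>i\<in>I. h (phi (nths xs (I - {i})))) = (\<Sum>i\<in>I. h (?e(xs ! i := ?e (xs ! i) - 1)))"
    using I by (intro sum.cong refl) (auto simp: phi_nths_remove)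
  also have "\<dots> = (\<Sum>x\<in>W. \<Sum>i\<in>{i\<in>I. xs ! i = x}. h (?e(xs ! i := ?e (xs ! i) - 1)))"
    by (rule sum.group[OF finI fin img, symmetric])
  also have "\<dots> = (\<Sum>x\<in>W. \<Sum>i\<in>{i\<in>I. xs ! i = x}. h (?e(x := ?e x - 1)))"
    by (intro sum.cong refl) auto
  also have "\<dots> = (\<Sum>x\<in>W. real (?e x) * h (?e(x := ?e x - 1)))"
  proof (intro sum.cong refl)
    fix x
    have "{i\<in>I. xs ! i = x} = {i. i < length xs \<and> i \<in> I \<and> xs ! i = x}" using I by auto
    then show "(\<Sum>i\<in>{i\<in>I. xs ! i = x}. h (?e(x := ?e x - 1))) = real (?e x) * h (?e(x := ?e x - 1))"
      by (simp add: phi_nths)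
  qed
  finally show ?thesis unfolding annih_def by simp
qed

lemma double_count:
  fixes g :: "nat set \<Rightarrow> real"
  assumes "finite I"
  shows "(\<Sum>i\<in>I. \<Sum>J | J \<subseteq> I - {i} \<and> card J = a. g J) = (\<Sum>J | J \<subseteq> I \<and> card J = a. real (card I - a) * g J)"
proof -
  let ?T = "{J. J \<subseteq> I \<and> card J = a}"
  have finT: "finite ?T" by (rule finite_subset[of _ "Pow I"]) (auto simp: assms)
  have "(\<Sum>i\<in>I. \<Sum>J | J \<subseteq> I - {i} \<and> card J = a. g J) = (\<Sum>i\<in>I. \<Sum>J\<in>?T. if i \<notin> J then g J else 0)"
  proof (rule sum.cong[OF refl])
    fix i assume "i \<in> I"
    have "{J. J \<subseteq> I - {i} \<and> card J = a} = {J\<in>?T. i \<notin> J}" by auto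
    then show "(\<Sum>J | J \<subseteq> I - {i} \<and> card J = a. g J) = (\<Sum>J\<in>?T. if i \<notin> J then g J else 0)"
      using sum.inter_filter[OF finT, of g "\<lambda>J. i \<notin> J"] by simp
  qed
  also have "\<dots> = (\<Sum>J\<in>?T. \<Sum>i\<in>I. if i \<notin> J then g J else 0)" by (rule sum.swap)
  also have "\<dots> = (\<Sum>J\<in>?T. real (card I - a) * g J)"
  proof (rule sum.cong[OF refl])
    fix J assume J: "J \<in> ?T"
    have "(\<Sum>i\<in>I. if i \<notin> J then g J else 0) = (\<Sum>i\<in>{i\<in>I. i \<notin> J}. g J)"
      using sum.inter_filter[OF assms, of "\<lambda>_. g J" "\<lambda>i. i \<notin> J"] by simp
    also have "{i\<in>I. i \<notin> J} = I - J" by auto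
    moreover have "card (I - J) = card I - a" using J assms by (auto simp: card_Diff_subset finite_subset)
    ultimately show "(\<Sum>i\<in>I. if i \<notin> J then g J else 0) = real (card I - a) * g J" by simp
  qed
  finally show ?thesis .
qed

lemma annih_pow_nths:
  assumes fin: "finite W" and xs: "set xs \<subseteq> W" and I: "I \<subseteq> {0..<length xs}" and j: "j \<le> card I"
  shows "(annih W ^^ j) h (phi (nths xs I)) = fact j * (\<Sum>J | J \<subseteq> I \<and> card J = card I - j. h (phi (nths xs J)))"
  using I j
proof (induction j arbitrary: I)
  case 0
  have finI: "finite I" using 0 finite_subset by blast
  have "{J. J \<subseteq> I \<and> card J = card I} = {I}" using finI card_subset_eq by blast
  then show ?case by simp
next
  case (Suc j)
  have finI: "finite I" using Suc finite_subset by blast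
  have "(annih W ^^ Suc j) h (phi (nths xs I)) = annih W ((annih W ^^ j) h) (phi (nths xs I))" by simp
  also have "\<dots> = (\<Sum>i\<in>I. (annih W ^^ j) h (phi (nths xs (I - {i}))))"
    by (rule annih_nths[OF fin xs Suc.prems(1)])
  also have "\<dots> = (\<Sum>i\<in>I. fact j * (\<Sum>J | J \<subseteq> I - {i} \<and> card J = card I - Suc j. h (phi (nths xs J))))"
  proof (intro sum.cong refl)
    fix i assume i: "i \<in> I"
    have c: "card (I - {i}) = card I - 1" using i finI by simp
    show "(annih W ^^ j) h (phi (nths xs (I - {i}))) = fact j * (\<Sum>J | J \<subseteq> I - {i} \<and> card J = card I - Suc j. h (phi (nths xs J)))"
    proof -
      have p1: "I - {i} \<subseteq> {0..<length xs}" using Suc.prems(1) by auto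
      have p2: "j \<le> card (I - {i})" using c Suc.prems(2) by simp
      have p3: "card (I - {i}) - j = card I - Suc j" using c by simp
      show ?thesis using Suc.IH[OF p1 p2] unfolding p3 .
    qed
  qed
  also have "\<dots> = fact j * (\<Sum>J | J \<subseteq> I \<and> card J = card I - Suc j. real (card I - (card I - Suc j)) * h (phi (nths xs J)))"
    by (simp add: sum_distrib_left[symmetric] double_count[OF finI])
  also have "\<dots> = fact (Suc j) * (\<Sum>J | J \<subseteq> I \<and> card J = card I - Suc j. h (phi (nths xs J)))"
    using Suc.prems(2) by (simp add: sum_distrib_left[symmetric] fact_Suc mult_ac)
  finally show ?case .
qed

lemma phi_nths_snoc:
  "phi (nths (ys @ [y]) J) v = phi (nths ys (J - {length ys})) v + (if length ys \<in> J \<and> y = v then 1 else 0)"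
proof -
  have "phi (nths ys J) v = phi (nths ys (J - {length ys})) v"
    unfolding phi_nths by (intro arg_cong[where f=card]) auto
  then show ?thesis by (simp add: nths_append nths_singleton phi_append) (simp add: phi_def)
qed

lemma count_nths:
  assumes "finite W" "set ys \<subseteq> W" "\<And>v. v \<notin> W \<Longrightarrow> \<zeta> v = 0"
  shows "card {J. J \<subseteq> {0..<length ys} \<and> phi (nths ys J) = \<zeta>} = (\<Prod>v\<in>W. phi ys v choose \<zeta> v)"
  using assms(2,3)
proof (induction ys arbitrary: \<zeta> rule: rev_induct)
  case Nil
  show ?case
  proof (cases "\<zeta> = (\<lambda>_. 0)")
    case True
    have "{J. J \<subseteq> {0..<length []} \<and> phi (nths [] J) = \<zeta>} = {{}}"
      using True by (auto simp: phi_def)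
    then show ?thesis using True by (simp add: phi_def)
  next
    case False
    then obtain v where v: "\<zeta> v \<noteq> 0" by auto
    have vW: "v \<in> W"
    proof (rule ccontr)
      assume "v \<notin> W" then show False using Nil.prems(2)[of v] v by simp
    qed
    have "{J. J \<subseteq> {0..<length []} \<and> phi (nths [] J) = \<zeta>} = {}"
      using False by (auto simp: phi_def)
    moreover have "(\<Prod>v\<in>W. phi [] v choose \<zeta> v) = 0"
      using v vW assms(1) by (intro prod_zero) (auto simp: phi_def intro!: bexI[of _ v])
    ultimately show ?thesis by simp
  qed
next
  case (snoc y ys)
  let ?n = "length ys"
  let ?S = "\<lambda>\<xi>. {J. J \<subseteq> {0..<length ys} \<and> phi (nths ys J) = \<xi>}"
  have yW: "y \<in> W" using snoc.prems by auto
  have ysW: "set ys \<subseteq> W" using snoc.prems by auto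
  have finS: "finite (?S \<xi>)" for \<xi> by (rule finite_subset[of _ "Pow {0..<length ys}"]) auto
  define A where "A = {J. J \<subseteq> {0..<length (ys @ [y])} \<and> phi (nths (ys @ [y]) J) = \<zeta>}"
  define B where "B = {K. K \<subseteq> {0..<length ys} \<and> (\<lambda>v. phi (nths ys K) v + (if y = v then 1 else 0)) = \<zeta>}"
  have AU: "A = ?S \<zeta> \<union> insert ?n ` B"
  proof (intro equalityI subsetI)
    fix J assume J: "J \<in> A"
    show "J \<in> ?S \<zeta> \<union> insert ?n ` B"
    proof (cases "?n \<in> J")
      case True
      have "J - {?n} \<in> B" using J True unfolding A_def B_def
        by (auto simp: phi_nths_snoc fun_eq_iff less_Suc_eq)
      then show ?thesis using True by (auto intro!: image_eqI[of _ _ "J - {?n}"])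
    next
      case False
      then show ?thesis using J unfolding A_def
        by (auto simp: phi_nths_snoc fun_eq_iff less_Suc_eq)
    qed
  next
    fix J assume "J \<in> ?S \<zeta> \<union> insert ?n ` B"
    then show "J \<in> A"
    proof
      assume J: "J \<in> ?S \<zeta>"
      then have "?n \<notin> J" by auto
      then show ?thesis using J unfolding A_def by (auto simp: phi_nths_snoc fun_eq_iff)
    next
      assume "J \<in> insert ?n ` B"
      then obtain K where K: "K \<in> B" "J = insert ?n K" by auto
      then have "?n \<notin> K" unfolding B_def by auto
      then have "insert ?n K - {?n} = K" by auto
      then show ?thesis using K unfolding A_def B_def by (auto simp: phi_nths_snoc fun_eq_iff)
    qed
  qed
  have disj: "?S \<zeta> \<inter> insert ?n ` B = {}" by auto
  have inj: "inj_on (insert ?n) B"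
  proof (rule inj_onI)
    fix K K' assume KK: "K \<in> B" "K' \<in> B" "insert ?n K = insert ?n K'"
    have "?n \<notin> K" "?n \<notin> K'" using KK(1,2) unfolding B_def by auto
    then show "K = K'" using KK(3) insert_ident by metis
  qed
  have finB: "finite B" by (rule finite_subset[of _ "Pow {0..<length ys}"]) (auto simp: B_def)
  have cardA: "card A = card (?S \<zeta>) + card B"
    unfolding AU using card_Un_disjoint[OF finS finite_imageI[OF finB] disj] card_image[OF inj] by simp
  have phisnoc: "phi (ys @ [y]) v = phi ys v + (if y = v then 1 else 0)" for v
    by (simp add: phi_append) (simp add: phi_def)
  have P: "(\<Prod>v\<in>W. phi (ys @ [y]) v choose \<zeta> v) = (phi ys y + 1 choose \<zeta> y) * (\<Prod>v\<in>W - {y}. phi ys v choose \<zeta> v)"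
  proof -
    have "(\<Prod>v\<in>W - {y}. phi (ys @ [y]) v choose \<zeta> v) = (\<Prod>v\<in>W - {y}. phi ys v choose \<zeta> v)"
      by (intro prod.cong refl) (auto simp add: phisnoc)
    then show ?thesis using prod.remove[OF assms(1) yW, of "\<lambda>v. phi (ys @ [y]) v choose \<zeta> v"]
      by (simp add: phisnoc)
  qed
  show ?case
  proof (cases "\<zeta> y")
    case 0
    have "B = {}" using 0 unfolding B_def by (auto simp: fun_eq_iff)
    then have "card A = card (?S \<zeta>)" using cardA by simp
    also have "\<dots> = (\<Prod>v\<in>W. phi ys v choose \<zeta> v)"
      by (rule snoc.IH[OF ysW]) (rule snoc.prems(2))
    also have "\<dots> = (\<Prod>v\<in>W. phi (ys @ [y]) v choose \<zeta> v)"
      unfolding P using prod.remove[OF assms(1) yW, of "\<lambda>v. phi ys v choose \<zeta> v"] 0 by simp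
    finally show ?thesis unfolding A_def .
  next
    case (Suc b)
    let ?z = "\<zeta>(y := b)"
    have B: "B = ?S ?z" unfolding B_def using Suc by (auto simp: fun_eq_iff split: if_splits)
    have z0: "\<And>v. v \<notin> W \<Longrightarrow> ?z v = 0" using snoc.prems(2) yW by auto
    have pz: "(\<Prod>v\<in>W. phi ys v choose ?z v) = (phi ys y choose b) * (\<Prod>v\<in>W - {y}. phi ys v choose \<zeta> v)"
    proof -
      have "(\<Prod>v\<in>W - {y}. phi ys v choose ?z v) = (\<Prod>v\<in>W - {y}. phi ys v choose \<zeta> v)"
        by (intro prod.cong refl) auto
      then show ?thesis using prod.remove[OF assms(1) yW, of "\<lambda>v. phi ys v choose ?z v"] by simp
    qed
    have pz2: "(\<Prod>v\<in>W. phi ys v choose \<zeta> v) = (phi ys y choose Suc b) * (\<Prod>v\<in>W - {y}. phi ys v choose \<zeta> v)"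
      using prod.remove[OF assms(1) yW, of "\<lambda>v. phi ys v choose \<zeta> v"] Suc by simp
    have "card A = card (?S \<zeta>) + card (?S ?z)" using cardA B by simp
    also have "\<dots> = (\<Prod>v\<in>W. phi ys v choose \<zeta> v) + (\<Prod>v\<in>W. phi ys v choose ?z v)"
    proof -
      have i1: "card (?S \<zeta>) = (\<Prod>v\<in>W. phi ys v choose \<zeta> v)"
        by (rule snoc.IH[OF ysW]) (rule snoc.prems(2))
      have i2: "card (?S ?z) = (\<Prod>v\<in>W. phi ys v choose ?z v)"
        by (rule snoc.IH[OF ysW]) (rule z0)
      show ?thesis unfolding i1 i2 ..
    qed
    also have "\<dots> = (\<Prod>v\<in>W. phi (ys @ [y]) v choose \<zeta> v)"
      unfolding P pz pz2 Suc by (simp add: algebra_simps)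
    finally show ?thesis unfolding A_def .
  qed
qed

lemma finite_config: "finite Vs \<Longrightarrow> finite (config_space Vs N)"
proof -
  assume fin: "finite Vs"
  have "config_space Vs N \<subseteq> {f. \<forall>x. (x \<in> Vs \<longrightarrow> f x \<in> {0..N}) \<and> (x \<notin> Vs \<longrightarrow> f x = 0)}"
  proof (safe)
    fix f x assume f: "f \<in> config_space Vs N" and x: "x \<in> Vs"
    have "f x \<le> sum f Vs" using fin x by (intro member_le_sum) auto
    then show "f x \<in> {0..N}" using f by (auto simp: config_space_def)
  next
    fix f x assume "f \<in> config_space Vs N" "x \<notin> Vs" then show "f x = 0" by (auto simp: config_space_def)
  qed
  moreover have "finite {f. \<forall>x. (x \<in> Vs \<longrightarrow> f x \<in> {0..N}) \<and> (x \<notin> Vs \<longrightarrow> f x = (0::nat))}"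
    by (rule finite_set_of_finite_funs) (use fin in auto)
  ultimately show ?thesis by (rule finite_subset)
qed

lemma Qpow_mpow:
  assumes "\<eta> \<in> config_space Vs N"
  shows "Qpow V Vs c r k \<eta> \<xi> = mpow (rate V Vs c r) (config_space Vs N) k \<eta> \<xi>"
  using assms
proof (induction k arbitrary: \<eta>)
  case 0 then show ?case by simp
next
  case (Suc k)
  have N: "sum \<eta> Vs = N" using Suc.prems by (simp add: config_space_def)
  show ?case unfolding Qpow.simps mpow.simps N
    by (intro sum.cong refl) (simp add: Suc.IH)
qed

lemma delta_sum:
  fixes g :: "'a \<Rightarrow> real"
  assumes "finite S" "y \<in> S" "a = 0 \<or> x \<in> S"
  shows "(\<Sum>z\<in>S. a * ((if x = z then 1 else 0) - (if y = z then 1 else 0)) * g z) = a * (g x - g y)"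
proof (cases "a = 0")
  case True then show ?thesis by simp
next
  case False
  then have x: "x \<in> S" using assms by auto
  have "(\<Sum>z\<in>S. a * ((if x = z then 1 else 0) - (if y = z then 1 else 0)) * g z)
     = (\<Sum>z\<in>S. a * (if x = z then g z else 0) - a * (if y = z then g z else 0))"
    by (rule sum.cong) auto
  also have "\<dots> = a * (g x - g y)" using x assms
    by (simp add: sum_subtractf sum.delta flip: sum_distrib_left) (simp add: algebra_simps)
  finally show ?thesis .
qed

definition Tk :: "'v set \<Rightarrow> 'v set \<Rightarrow> (('v \<Rightarrow> nat) \<Rightarrow> ('v \<Rightarrow> nat) \<Rightarrow> real)
    \<Rightarrow> ('v \<Rightarrow> 'v \<Rightarrow> real) \<Rightarrow> nat \<Rightarrow> (('v \<Rightarrow> nat) \<Rightarrow> real) \<Rightarrow> ('v \<Rightarrow> nat) \<Rightarrow> real" where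
  "Tk V Vs c r k g \<eta> = (\<Sum>\<xi>\<in>config_space Vs (sum \<eta> Vs). Qpow V Vs c r k \<eta> \<xi> * g \<xi>)"

context
  fixes V Vs :: "'v set" and c :: "('v \<Rightarrow> nat) \<Rightarrow> ('v \<Rightarrow> nat) \<Rightarrow> real" and r :: "'v \<Rightarrow> 'v \<Rightarrow> real"
  assumes fin: "finite Vs" and sub: "V \<subseteq> Vs"
begin

lemma finV: "finite V" using fin sub finite_subset by blast

lemma split_V: "sum f Vs = sum f V + sum f (Vs - V)"
  using sum.subset_diff[OF sub fin, of f] by (simp add: add.commute)

lemma tgtL_in:
  assumes "\<eta> \<in> config_space Vs N" "\<xi>' \<in> config_space V (sum \<eta> V)"
  shows "(\<lambda>x. if x \<in> V then \<xi>' x else \<eta> x) \<in> config_space Vs N"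
proof -
  let ?t = "\<lambda>x. if x \<in> V then \<xi>' x else \<eta> x"
  have s1: "sum ?t V = sum \<xi>' V" by simp
  have s2: "sum ?t (Vs - V) = sum \<eta> (Vs - V)" by (rule sum.cong) auto
  have s3: "sum \<xi>' V = sum \<eta> V" using assms(2) unfolding config_space_def by blast
  have s4: "sum \<eta> Vs = N" using assms(1) unfolding config_space_def by blast
  have "sum ?t Vs = N" using split_V[of ?t] split_V[of \<eta>] s1 s2 s3 s4 by simp
  moreover have "?t x = 0" if "x \<notin> Vs" for x
    using that sub assms(1) unfolding config_space_def by auto
  ultimately show ?thesis unfolding config_space_def by blast
qed

lemma tgtH_in:
  assumes "\<eta> \<in> config_space Vs N" "i \<in> V" "j \<in> Vs - V" "\<eta> i \<noteq> 0"
  shows "\<eta>(i := \<eta> i - 1, j := \<eta> j + 1) \<in> config_space Vs N"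
proof -
  have ij: "i \<noteq> j" "i \<in> Vs" "j \<in> Vs" using assms sub by auto
  have "sum (\<eta>(i := \<eta> i - 1, j := \<eta> j + 1)) Vs = sum (\<eta>(i := \<eta> i - 1)) Vs + 1"
    using ij fin by (simp add: sum.remove[of Vs j] sum.remove[of Vs j \<eta>])
  also have "sum (\<eta>(i := \<eta> i - 1)) Vs + 1 = sum \<eta> Vs"
    using ij fin assms(4) by (simp add: sum.remove[of Vs i] sum.remove[of Vs i \<eta>])
  finally show ?thesis using assms ij by (auto simp: config_space_def)
qed

lemma genAbs_rep:
  assumes eta: "\<eta> \<in> config_space Vs N"
  shows "genAbs V Vs c r g \<eta> = (\<Sum>\<zeta>\<in>config_space Vs N. rate V Vs c r \<eta> \<zeta> * g \<zeta>)"
proof -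
  let ?S = "config_space Vs N"
  have finS: "finite ?S" by (rule finite_config[OF fin])
  have L: "(\<Sum>\<zeta>\<in>?S. genL V c (\<lambda>z. if z = \<zeta> then 1 else 0) \<eta> * g \<zeta>) = genL V c g \<eta>"
  proof -
    have "(\<Sum>\<zeta>\<in>?S. genL V c (\<lambda>z. if z = \<zeta> then 1 else 0) \<eta> * g \<zeta>)
       = (\<Sum>\<xi>'\<in>config_space V (sum \<eta> V). \<Sum>\<zeta>\<in>?S. c (restrV V \<eta>) \<xi>' *
           ((if (\<lambda>x. if x \<in> V then \<xi>' x else \<eta> x) = \<zeta> then 1 else 0) - (if \<eta> = \<zeta> then 1 else 0)) * g \<zeta>)"
      unfolding genL_def by (simp only: sum_distrib_right) (rule sum.swap)
    also have "\<dots> = genL V c g \<eta>"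
      unfolding genL_def
      by (intro sum.cong refl delta_sum finS) (auto intro: eta tgtL_in[OF eta])
    finally show ?thesis .
  qed
  have H: "(\<Sum>\<zeta>\<in>?S. genH V Vs r (\<lambda>z. if z = \<zeta> then 1 else 0) \<eta> * g \<zeta>) = genH V Vs r g \<eta>"
  proof -
    have "(\<Sum>\<zeta>\<in>?S. genH V Vs r (\<lambda>z. if z = \<zeta> then 1 else 0) \<eta> * g \<zeta>)
       = (\<Sum>i\<in>V. \<Sum>j\<in>Vs - V. \<Sum>\<zeta>\<in>?S. (r i j * real (\<eta> i)) *
           ((if \<eta>(i := \<eta> i - 1, j := \<eta> j + 1) = \<zeta> then 1 else 0) - (if \<eta> = \<zeta> then 1 else 0)) * g \<zeta>)"
    proof -
      have "(\<Sum>\<zeta>\<in>?S. genH V Vs r (\<lambda>z. if z = \<zeta> then 1 else 0) \<eta> * g \<zeta>)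
        = (\<Sum>\<zeta>\<in>?S. \<Sum>i\<in>V. \<Sum>j\<in>Vs - V. (r i j * real (\<eta> i) *
           ((if \<eta>(i := \<eta> i - 1, j := \<eta> j + 1) = \<zeta> then 1 else 0) - (if \<eta> = \<zeta> then 1 else 0))) * g \<zeta>)"
        unfolding genH_def by (simp only: sum_distrib_right)
      also have "\<dots> = (\<Sum>i\<in>V. \<Sum>\<zeta>\<in>?S. \<Sum>j\<in>Vs - V. (r i j * real (\<eta> i) *
           ((if \<eta>(i := \<eta> i - 1, j := \<eta> j + 1) = \<zeta> then 1 else 0) - (if \<eta> = \<zeta> then 1 else 0))) * g \<zeta>)"
        by (rule sum.swap)
      also have "\<dots> = (\<Sum>i\<in>V. \<Sum>j\<in>Vs - V. \<Sum>\<zeta>\<in>?S. (r i j * real (\<eta> i) *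
           ((if \<eta>(i := \<eta> i - 1, j := \<eta> j + 1) = \<zeta> then 1 else 0) - (if \<eta> = \<zeta> then 1 else 0))) * g \<zeta>)"
        by (rule sum.cong[OF refl]) (rule sum.swap)
      finally show ?thesis by (simp only: mult.assoc)
    qed
    also have "\<dots> = genH V Vs r g \<eta>"
    proof -
      have tH: "r i j * real (\<eta> i) = 0 \<or> \<eta>(i := \<eta> i - 1, j := \<eta> j + 1) \<in> ?S"
        if "i \<in> V" "j \<in> Vs - V" for i j
        using tgtH_in[OF eta that] by auto
      show ?thesis unfolding genH_def
        by (intro sum.cong refl trans[OF delta_sum] finS eta tH) auto
    qed
    finally show ?thesis .
  qed
  show ?thesis unfolding rate_def genAbs_def using L H by (simp add: distrib_right sum.distrib)
qed

lemma rate_rowsum: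
  assumes "\<eta> \<in> config_space Vs N"
  shows "(\<Sum>\<zeta>\<in>config_space Vs N. rate V Vs c r \<eta> \<zeta>) = 0"
proof -
  have "genAbs V Vs c r (\<lambda>_. 1) \<eta> = 0" by (simp add: genAbs_def genL_def genH_def)
  then show ?thesis using genAbs_rep[OF assms, of "\<lambda>_. 1"] by simp
qed

lemma config_sum: "\<eta> \<in> config_space Vs N \<Longrightarrow> sum \<eta> Vs = N"
  by (simp add: config_space_def)

lemma config_vanish: "\<eta> \<in> config_space Vs N \<Longrightarrow> \<eta> \<in> config_space Vs (sum \<eta> Vs)"
  by (simp add: config_space_def)

lemma Tk_Suc:
  assumes eta: "\<eta> \<in> config_space Vs N"
  shows "Tk V Vs c r (Suc k) g \<eta> = genAbs V Vs c r (Tk V Vs c r k g) \<eta>"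
proof -
  let ?S = "config_space Vs N"
  have N: "sum \<eta> Vs = N" using eta by (simp add: config_space_def)
  have "Tk V Vs c r (Suc k) g \<eta> = (\<Sum>\<xi>\<in>?S. (\<Sum>\<zeta>\<in>?S. rate V Vs c r \<eta> \<zeta> * Qpow V Vs c r k \<zeta> \<xi>) * g \<xi>)"
    unfolding Tk_def by (simp add: N)
  also have "\<dots> = (\<Sum>\<zeta>\<in>?S. rate V Vs c r \<eta> \<zeta> * (\<Sum>\<xi>\<in>?S. Qpow V Vs c r k \<zeta> \<xi> * g \<xi>))"
    by (simp only: sum_distrib_right sum_distrib_left mult.assoc) (rule sum.swap)
  also have "\<dots> = (\<Sum>\<zeta>\<in>?S. rate V Vs c r \<eta> \<zeta> * Tk V Vs c r k g \<zeta>)"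
    unfolding Tk_def by (rule sum.cong[OF refl]) (simp add: config_sum)
  also have "\<dots> = genAbs V Vs c r (Tk V Vs c r k g) \<eta>" by (rule genAbs_rep[OF eta, symmetric])
  finally show ?thesis .
qed

lemma Tk_0:
  assumes eta: "\<eta> \<in> config_space Vs N"
  shows "Tk V Vs c r 0 g \<eta> = g \<eta>"
  using finite_config[OF fin] config_vanish[OF eta] unfolding Tk_def
  by (simp add: sum.delta if_distrib[of "\<lambda>u. u * _"] cong: if_cong)

lemma rate_absorb:
  assumes z: "\<zeta> \<in> config_space (Vs - V) m"
  shows "genAbs V Vs c r g \<zeta> = 0"
proof -
  have zV: "\<zeta> i = 0" if "i \<in> V" for i using z that by (auto simp: config_space_def)
  have s0: "sum \<zeta> V = 0" using zV by simp
  have "genL V c g \<zeta> = 0"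
    unfolding genL_def
  proof (intro sum.neutral ballI)
    fix \<xi>' assume "\<xi>' \<in> config_space V (sum \<zeta> V)"
    then have "\<xi>' x = 0" for x using s0 finV by (cases "x \<in> V") (auto simp: config_space_def)
    then have "(\<lambda>x. if x \<in> V then \<xi>' x else \<zeta> x) = \<zeta>" using zV by auto
    then show "c (restrV V \<zeta>) \<xi>' * (g (\<lambda>x. if x \<in> V then \<xi>' x else \<zeta> x) - g \<zeta>) = 0" by simp
  qed
  moreover have "genH V Vs r g \<zeta> = 0" unfolding genH_def using zV by simp
  ultimately show ?thesis by (simp add: genAbs_def)
qed

lemma rate_offdiag:
  assumes c_nonneg: "\<And>\<xi> \<xi>'. \<xi> \<in> state_space V V UNIV \<Longrightarrow> \<xi>' \<in> state_space V V UNIV \<Longrightarrow> \<xi> \<noteq> \<xi>' \<Longrightarrow> c \<xi> \<xi>' \<ge> 0"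
    and r_nonneg: "\<And>i j. i \<in> V \<Longrightarrow> j \<in> Vs - V \<Longrightarrow> r i j \<ge> 0"
    and ne: "\<eta> \<noteq> \<eta>'" and eta: "\<eta> \<in> config_space Vs N"
  shows "0 \<le> rate V Vs c r \<eta> \<eta>'"
proof -
  have L: "0 \<le> genL V c (\<lambda>\<zeta>. if \<zeta> = \<eta>' then 1 else 0) \<eta>"
    unfolding genL_def
  proof (intro sum_nonneg)
    fix \<xi>' assume xi: "\<xi>' \<in> config_space V (sum \<eta> V)"
    show "0 \<le> c (restrV V \<eta>) \<xi>' * ((if (\<lambda>x. if x \<in> V then \<xi>' x else \<eta> x) = \<eta>' then 1 else 0) - (if \<eta> = \<eta>' then 1 else 0))"
    proof (cases "(\<lambda>x. if x \<in> V then \<xi>' x else \<eta> x) = \<eta>'")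
      case True
      have "\<xi>' \<noteq> restrV V \<eta>"
      proof
        assume "\<xi>' = restrV V \<eta>"
        then have "(\<lambda>x. if x \<in> V then \<xi>' x else \<eta> x) = \<eta>" by (auto simp: restrV_def)
        then show False using True ne by simp
      qed
      moreover have "restrV V \<eta> \<in> state_space V V UNIV" by (auto simp: restrV_def state_space_def)
      moreover have "\<xi>' \<in> state_space V V UNIV" using xi by (auto simp: config_space_def state_space_def)
      ultimately have "0 \<le> c (restrV V \<eta>) \<xi>'" using c_nonneg by metis
      then show ?thesis using True ne by simp
    next
      case False then show ?thesis using ne by simp
    qed
  qed
  have H: "0 \<le> genH V Vs r (\<lambda>\<zeta>. if \<zeta> = \<eta>' then 1 else 0) \<eta>"
    unfolding genH_def using ne by (auto intro!: sum_nonneg mult_nonneg_nonneg r_nonneg)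
  show ?thesis unfolding rate_def genAbs_def using L H by simp
qed

end

context
  fixes V Vs :: "'v set" and \<Lambda> :: "nat set" and c :: "('v \<Rightarrow> nat) \<Rightarrow> ('v \<Rightarrow> nat) \<Rightarrow> real" and r :: "'v \<Rightarrow> 'v \<Rightarrow> real"
  assumes fin: "finite Vs" and sub: "V \<subseteq> Vs"
    and Lambda_down: "\<And>k. Suc k \<in> \<Lambda> \<Longrightarrow> k \<in> \<Lambda>"
    and c_Lambda: "\<And>\<xi> \<xi>'. \<xi> \<in> state_space V V \<Lambda> \<Longrightarrow> \<xi>' \<in> config_space V (sum \<xi> V) \<Longrightarrow>
                     c \<xi> \<xi>' \<noteq> 0 \<Longrightarrow> \<xi>' \<in> state_space V V \<Lambda>"
    and cons: "consistent V Vs \<Lambda> c r"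
begin

lemma SS_vanish: "\<eta> \<in> state_space V Vs \<Lambda> \<Longrightarrow> \<eta> \<in> config_space Vs (sum \<eta> Vs)"
  by (simp add: state_space_def config_space_def)

lemma SS_dec: "\<eta> \<in> state_space V Vs \<Lambda> \<Longrightarrow> x \<in> Vs \<Longrightarrow> \<eta>(x := \<eta> x - 1) \<in> state_space V Vs \<Lambda>"
proof -
  assume eta: "\<eta> \<in> state_space V Vs \<Lambda>" and x: "x \<in> Vs"
  have dec: "\<eta> x - 1 \<in> \<Lambda>" if "x \<in> V"
  proof (cases "\<eta> x")
    case 0 then show ?thesis using eta that unfolding state_space_def by force
  next
    case (Suc k)
    then have "Suc k \<in> \<Lambda>" using eta that unfolding state_space_def by force
    then show ?thesis using Suc Lambda_down by simp
  qed
  show ?thesis using eta x dec unfolding state_space_def by auto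
qed

lemma genAbs_local:
  assumes eta: "\<eta> \<in> state_space V Vs \<Lambda>" and gg: "\<And>\<zeta>. \<zeta> \<in> state_space V Vs \<Lambda> \<Longrightarrow> g \<zeta> = g' \<zeta>"
  shows "genAbs V Vs c r g \<eta> = genAbs V Vs c r g' \<eta>"
proof -
  have rs: "restrV V \<eta> \<in> state_space V V \<Lambda>" using eta by (auto simp: restrV_def state_space_def)
  have L: "genL V c g \<eta> = genL V c g' \<eta>"
    unfolding genL_def
  proof (rule sum.cong[OF refl])
    fix \<xi>' assume xi: "\<xi>' \<in> config_space V (sum \<eta> V)"
    show "c (restrV V \<eta>) \<xi>' * (g (\<lambda>x. if x \<in> V then \<xi>' x else \<eta> x) - g \<eta>) =
          c (restrV V \<eta>) \<xi>' * (g' (\<lambda>x. if x \<in> V then \<xi>' x else \<eta> x) - g' \<eta>)"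
    proof (cases "c (restrV V \<eta>) \<xi>' = 0")
      case False
      have "sum (restrV V \<eta>) V = sum \<eta> V" by (simp add: restrV_def)
      then have "\<xi>' \<in> state_space V V \<Lambda>" using c_Lambda[OF rs _ False] xi by simp
      then have "(\<lambda>x. if x \<in> V then \<xi>' x else \<eta> x) \<in> state_space V Vs \<Lambda>"
        using eta sub by (auto simp: state_space_def)
      then show ?thesis using gg eta by simp
    qed simp
  qed
  have H: "genH V Vs r g \<eta> = genH V Vs r g' \<eta>"
    unfolding genH_def
  proof (intro sum.cong refl)
    fix i j assume i: "i \<in> V" and j: "j \<in> Vs - V"
    show "r i j * real (\<eta> i) * (g (\<eta>(i := \<eta> i - 1, j := \<eta> j + 1)) - g \<eta>) =
          r i j * real (\<eta> i) * (g' (\<eta>(i := \<eta> i - 1, j := \<eta> j + 1)) - g' \<eta>)"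
    proof (cases "\<eta> i = 0")
      case False
      have "\<eta> i - 1 \<in> \<Lambda>" using eta i False Lambda_down[of "\<eta> i - 1"] by (auto simp: state_space_def)
      then have "\<eta>(i := \<eta> i - 1, j := \<eta> j + 1) \<in> state_space V Vs \<Lambda>"
        using eta i j sub by (auto simp: state_space_def)
      then show ?thesis using gg eta by simp
    qed simp
  qed
  show ?thesis unfolding genAbs_def using L H by simp
qed

lemma annih_local:
  assumes eta: "\<eta> \<in> state_space V Vs \<Lambda>" and gg: "\<And>\<zeta>. \<zeta> \<in> state_space V Vs \<Lambda> \<Longrightarrow> g \<zeta> = g' \<zeta>"
  shows "annih Vs g \<eta> = annih Vs g' \<eta>"
  unfolding annih_def using gg SS_dec[OF eta] by (intro sum.cong refl) auto

lemma Tk_annih: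
  assumes "\<eta> \<in> state_space V Vs \<Lambda>"
  shows "Tk V Vs c r k (annih Vs g) \<eta> = annih Vs (Tk V Vs c r k g) \<eta>"
  using assms
proof (induction k arbitrary: g \<eta>)
  case 0
  have v: "\<eta> \<in> config_space Vs (sum \<eta> Vs)" by (rule SS_vanish[OF 0])
  have "Tk V Vs c r 0 (annih Vs g) \<eta> = annih Vs g \<eta>" by (rule Tk_0[OF fin sub v])
  also have "\<dots> = annih Vs (Tk V Vs c r 0 g) \<eta>"
  proof -
    have e: "Tk V Vs c r 0 g (\<eta>(x := \<eta> x - 1)) = g (\<eta>(x := \<eta> x - 1))" if "x \<in> Vs" for x
      by (rule Tk_0[OF fin sub SS_vanish[OF SS_dec[OF 0 that]]])
    show ?thesis unfolding annih_def by (rule sum.cong[OF refl]) (simp only: e)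
  qed
  finally show ?case .
next
  case (Suc k)
  have v: "\<eta> \<in> config_space Vs (sum \<eta> Vs)" by (rule SS_vanish[OF Suc.prems])
  have "Tk V Vs c r (Suc k) (annih Vs g) \<eta> = genAbs V Vs c r (Tk V Vs c r k (annih Vs g)) \<eta>"
    by (rule Tk_Suc[OF fin sub v])
  also have "\<dots> = genAbs V Vs c r (annih Vs (Tk V Vs c r k g)) \<eta>"
    by (rule genAbs_local[OF Suc.prems]) (rule Suc.IH)
  also have "\<dots> = annih Vs (genAbs V Vs c r (Tk V Vs c r k g)) \<eta>"
    using cons Suc.prems unfolding consistent_def by blast
  also have "\<dots> = annih Vs (Tk V Vs c r (Suc k) g) \<eta>"
  proof -
    have e: "genAbs V Vs c r (Tk V Vs c r k g) (\<eta>(x := \<eta> x - 1)) = Tk V Vs c r (Suc k) g (\<eta>(x := \<eta> x - 1))" if "x \<in> Vs" for x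
      by (rule Tk_Suc[OF fin sub SS_vanish[OF SS_dec[OF Suc.prems that]], symmetric])
    show ?thesis unfolding annih_def by (rule sum.cong[OF refl]) (simp only: e)
  qed
  finally show ?case .
qed

lemma Tk_annih_pow:
  assumes "\<eta> \<in> state_space V Vs \<Lambda>"
  shows "Tk V Vs c r k ((annih Vs ^^ j) g) \<eta> = (annih Vs ^^ j) (Tk V Vs c r k g) \<eta>"
  using assms
proof (induction j arbitrary: \<eta>)
  case 0 then show ?case by simp
next
  case (Suc j)
  have "Tk V Vs c r k ((annih Vs ^^ Suc j) g) \<eta> = annih Vs (Tk V Vs c r k ((annih Vs ^^ j) g)) \<eta>"
    using Tk_annih[OF Suc.prems] by simp
  also have "\<dots> = annih Vs ((annih Vs ^^ j) (Tk V Vs c r k g)) \<eta>"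
    by (rule annih_local[OF Suc.prems]) (rule Suc.IH)
  finally show ?case by simp
qed

end

lemma F_identity:
  assumes fin: "finite Vs" and sub: "V \<subseteq> Vs"
    and xi: "\<xi> \<in> config_space Vs n" and z: "\<zeta> \<in> config_space (Vs - V) m" and mn: "m \<le> n"
  shows "Fdual (Vs - V) \<zeta> \<xi> = (annih Vs ^^ (n - m)) (\<lambda>\<eta>. if \<eta> = \<zeta> then 1 else 0) \<xi> / fact (n - m)"
proof -
  have xv: "\<And>x. x \<notin> Vs \<Longrightarrow> \<xi> x = 0" using xi by (simp add: config_space_def)
  have "\<exists>ys. phi ys = \<xi> \<and> set ys \<subseteq> Vs" by (rule exists_phi[OF fin]) (rule xv)
  then obtain ys where ys: "phi ys = \<xi>" "set ys \<subseteq> Vs" by blast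
  have len: "length ys = n" using sum_phi[OF fin ys(2)] ys(1) xi by (simp add: config_space_def)
  have zV: "\<zeta> v = 0" if "v \<notin> Vs - V" for v using z that by (simp add: config_space_def)
  have zVs: "\<zeta> v = 0" if "v \<notin> Vs" for v using zV that by simp
  have sz: "sum \<zeta> Vs = m"
  proof -
    have "sum \<zeta> Vs = sum \<zeta> (Vs - V) + sum \<zeta> V" using sum.subset_diff[OF sub fin] by simp
    moreover have "sum \<zeta> V = 0" using zV by simp
    ultimately show ?thesis using z by (simp add: config_space_def)
  qed
  let ?T = "{J. J \<subseteq> {0..<n} \<and> card J = m}"
  have nths_all': "nths ys {0..<n} = ys" using len by (simp add: nths_all)
  have A: "(annih Vs ^^ (n - m)) (\<lambda>\<eta>. if \<eta> = \<zeta> then 1 else 0) \<xi>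
      = fact (n - m) * (\<Sum>J\<in>?T. if phi (nths ys J) = \<zeta> then 1 else 0)"
    using annih_pow_nths[OF fin ys(2), of "{0..<n}" "n - m" "\<lambda>\<eta>. if \<eta> = \<zeta> then 1 else 0"] mn len
    by (simp add: nths_all' ys(1))
  have finT: "finite ?T" by (rule finite_subset[of _ "Pow {0..<n}"]) auto
  have "(\<Sum>J\<in>?T. if phi (nths ys J) = \<zeta> then 1 else (0::real)) = real (card {J\<in>?T. phi (nths ys J) = \<zeta>})"
    using sum.inter_filter[OF finT, of "\<lambda>_. 1::real" "\<lambda>J. phi (nths ys J) = \<zeta>"] by simp
  also have "{J\<in>?T. phi (nths ys J) = \<zeta>} = {J. J \<subseteq> {0..<length ys} \<and> phi (nths ys J) = \<zeta>}"
  proof (intro equalityI subsetI)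
    fix J assume J: "J \<in> {J. J \<subseteq> {0..<length ys} \<and> phi (nths ys J) = \<zeta>}"
    have "card J = length (nths ys J)"
    proof -
      have "{i. i < length ys \<and> i \<in> J} = J" using J by auto
      then show ?thesis by (simp add: length_nths)
    qed
    also have "\<dots> = sum (phi (nths ys J)) Vs"
      using sum_phi[OF fin, of "nths ys J"] set_nths_subset[of ys J] ys(2) by simp
    also have "\<dots> = m" using J sz by simp
    finally show "J \<in> {J\<in>?T. phi (nths ys J) = \<zeta>}" using J len by simp
  qed (use len in auto)
  also have "card {J. J \<subseteq> {0..<length ys} \<and> phi (nths ys J) = \<zeta>} = (\<Prod>v\<in>Vs. phi ys v choose \<zeta> v)"
    by (rule count_nths[OF fin ys(2)]) (rule zVs)
  also have "(\<Prod>v\<in>Vs. phi ys v choose \<zeta> v) = (\<Prod>v\<in>Vs - V. \<xi> v choose \<zeta> v)"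
  proof -
    have "(\<Prod>v\<in>Vs. phi ys v choose \<zeta> v) = (\<Prod>v\<in>Vs - V. phi ys v choose \<zeta> v) * (\<Prod>v\<in>V. phi ys v choose \<zeta> v)"
      using prod.subset_diff[OF sub fin] by simp
    moreover have "(\<Prod>v\<in>V. phi ys v choose \<zeta> v) = 1" using zV by simp
    ultimately show ?thesis using ys(1) by simp
  qed
  finally have B: "(\<Sum>J\<in>?T. if phi (nths ys J) = \<zeta> then 1 else (0::real)) = real (\<Prod>v\<in>Vs - V. \<xi> v choose \<zeta> v)" .
  show ?thesis unfolding A B Fdual_def by (simp add: of_nat_prod)
qed

lemma phi_nths_config:
  assumes fin: "finite Vs" and xs: "set xs \<subseteq> Vs" and I: "I \<subseteq> {0..<length xs}"
  shows "phi (nths xs I) \<in> config_space Vs (card I)"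
proof -
  have s: "set (nths xs I) \<subseteq> Vs" using set_nths_subset[of xs I] xs by blast
  have "{i. i < length xs \<and> i \<in> I} = I" using I by auto
  then have "length (nths xs I) = card I" by (simp add: length_nths)
  then have "sum (phi (nths xs I)) Vs = card I" using sum_phi[OF fin s] by simp
  moreover have "phi (nths xs I) x = 0" if "x \<notin> Vs" for x
    using phi_outside[of x "nths xs I"] s that by blast
  ultimately show ?thesis by (simp add: config_space_def)
qed

theorem theorem5p5:
  fixes V Vs :: "'v set" and \<Lambda> :: "nat set"
    and c :: "('v \<Rightarrow> nat) \<Rightarrow> ('v \<Rightarrow> nat) \<Rightarrow> real"
    and r :: "'v \<Rightarrow> 'v \<Rightarrow> real"
    and xs :: "'v list" and m :: nat and \<zeta> :: "'v \<Rightarrow> nat"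
  assumes fin: "finite Vs" and sub: "V \<subseteq> Vs"
    and Lambda0: "0 \<in> \<Lambda>" and Lambda_down: "\<And>k. Suc k \<in> \<Lambda> \<Longrightarrow> k \<in> \<Lambda>"
    and c_nonneg: "\<And>\<xi> \<xi>'. \<xi> \<in> state_space V V UNIV \<Longrightarrow> \<xi>' \<in> state_space V V UNIV \<Longrightarrow>
                     \<xi> \<noteq> \<xi>' \<Longrightarrow> c \<xi> \<xi>' \<ge> 0"
    and c_conserv: "\<And>\<xi> \<xi>'. \<xi> \<in> state_space V V UNIV \<Longrightarrow> \<xi>' \<in> state_space V V UNIV \<Longrightarrow>
                     c \<xi> \<xi>' \<noteq> 0 \<Longrightarrow> sum \<xi>' V = sum \<xi> V"
    and c_Lambda: "\<And>\<xi> \<xi>'. \<xi> \<in> state_space V V \<Lambda> \<Longrightarrow> \<xi>' \<in> config_space V (sum \<xi> V) \<Longrightarrow>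
                     c \<xi> \<xi>' \<noteq> 0 \<Longrightarrow> \<xi>' \<in> state_space V V \<Lambda>"
    and r_nonneg: "\<And>i j. i \<in> V \<Longrightarrow> j \<in> Vs - V \<Longrightarrow> r i j \<ge> 0"
    and cons: "consistent V Vs \<Lambda> c r"
    and xs_sites: "set xs \<subseteq> Vs"
    and xs_state: "phi xs \<in> state_space V Vs \<Lambda>"
    and m_pos: "1 \<le> m" and m_less: "m < length xs"
    and zeta: "\<zeta> \<in> config_space (Vs - V) m"
  shows "expect_inf V Vs c r (phi xs) (Fdual (Vs - V) \<zeta>) =
         (\<Sum>I | I \<subseteq> {0..<length xs} \<and> card I = m.
            prob_inf V Vs c r (phi (nths xs I)) \<zeta>)"
proof -
  define n where "n = length xs"
  define \<eta>0 where "\<eta>0 = phi xs"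
  let ?Sn = "config_space Vs n"
  let ?Sm = "config_space Vs m"
  let ?II = "{I. I \<subseteq> {0..<n} \<and> card I = m}"
  let ?Q = "rate V Vs c r"
  let ?F = "Fdual (Vs - V) \<zeta>"
  let ?one = "\<lambda>\<eta>. if \<eta> = \<zeta> then 1 else (0::real)"
  have mn: "m \<le> n" using m_less n_def by simp
  have finSn: "finite ?Sn" and finSm: "finite ?Sm" using finite_config[OF fin] by auto
  have nths_all': "nths xs {0..<n} = xs" by (simp add: nths_all n_def)
  have eta0: "\<eta>0 \<in> ?Sn"
    using phi_nths_config[OF fin xs_sites, of "{0..<length xs}"] by (simp add: \<eta>0_def n_def nths_all)
  have sum_eta0: "sum \<eta>0 Vs = n" using eta0 by (simp add: config_space_def)
  have phiI: "phi (nths xs I) \<in> ?Sm" if "I \<in> ?II" for I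
    using phi_nths_config[OF fin xs_sites, of I] that n_def by auto
  have zSm: "\<zeta> \<in> ?Sm"
  proof -
    have zV: "\<zeta> v = 0" if "v \<notin> Vs - V" for v using zeta that by (simp add: config_space_def)
    have "sum \<zeta> Vs = sum \<zeta> (Vs - V) + sum \<zeta> V" using sum.subset_diff[OF sub fin] by simp
    moreover have "sum \<zeta> V = 0" using zV by simp
    ultimately show ?thesis using zeta zV by (simp add: config_space_def)
  qed
  have finII: "finite ?II" by (rule finite_subset[of _ "Pow {0..<n}"]) auto
  have summ: "summable (\<lambda>k. t ^ k / fact k * Qpow V Vs c r k \<eta> \<xi>)" if "\<eta> \<in> config_space Vs N" for t \<eta> \<xi> N
    using mpow_summable[OF finite_config[OF fin] that, of t ?Q \<xi>] by (simp add: Qpow_mpow[OF that])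
  have TkF: "Tk V Vs c r k ?F \<eta>0 = (\<Sum>I\<in>?II. Qpow V Vs c r k (phi (nths xs I)) \<zeta>)" for k
  proof -
    let ?G = "(annih Vs ^^ (n - m)) ?one"
    have "Tk V Vs c r k ?F \<eta>0 = Tk V Vs c r k (\<lambda>\<xi>. ?G \<xi> / fact (n - m)) \<eta>0"
      unfolding Tk_def sum_eta0
      by (rule sum.cong[OF refl]) (simp add: F_identity[OF fin sub _ zeta mn])
    also have "\<dots> = Tk V Vs c r k ?G \<eta>0 / fact (n - m)"
      unfolding Tk_def by (simp add: sum_divide_distrib)
    also have "Tk V Vs c r k ?G \<eta>0 = (annih Vs ^^ (n - m)) (Tk V Vs c r k ?one) \<eta>0"
      by (rule Tk_annih_pow[of Vs V \<Lambda> c r]) (use fin sub Lambda_down c_Lambda cons xs_state \<eta>0_def in blast)+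
    also have "\<dots> = fact (n - m) * (\<Sum>J\<in>?II. Tk V Vs c r k ?one (phi (nths xs J)))"
      using annih_pow_nths[OF fin xs_sites, of "{0..<n}" "n - m" "Tk V Vs c r k ?one"] mn
      by (simp add: nths_all \<eta>0_def n_def)
    also have "(\<Sum>J\<in>?II. Tk V Vs c r k ?one (phi (nths xs J))) = (\<Sum>I\<in>?II. Qpow V Vs c r k (phi (nths xs I)) \<zeta>)"
    proof (rule sum.cong[OF refl])
      fix J assume J: "J \<in> ?II"
      have s: "sum (phi (nths xs J)) Vs = m" using phiI[OF J] by (simp add: config_space_def)
      show "Tk V Vs c r k ?one (phi (nths xs J)) = Qpow V Vs c r k (phi (nths xs J)) \<zeta>"
        unfolding Tk_def s using zSm finSm
        by (simp add: sum.delta' if_distrib[of "\<lambda>u. _ * u"] cong: if_cong)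
    qed
    finally show ?thesis by simp
  qed
  have fin_t: "expect_t V Vs c r t \<eta>0 ?F = (\<Sum>I\<in>?II. trans_prob V Vs c r t (phi (nths xs I)) \<zeta>)" for t
  proof -
    have "expect_t V Vs c r t \<eta>0 ?F = (\<Sum>\<xi>\<in>?Sn. (\<Sum>k. t ^ k / fact k * Qpow V Vs c r k \<eta>0 \<xi>) * ?F \<xi>)"
      unfolding expect_t_def trans_prob_def sum_eta0 ..
    also have "\<dots> = (\<Sum>\<xi>\<in>?Sn. \<Sum>k. t ^ k / fact k * Qpow V Vs c r k \<eta>0 \<xi> * ?F \<xi>)"
      by (rule sum.cong[OF refl]) (rule suminf_mult2[OF summ[OF eta0]])
    also have "\<dots> = (\<Sum>k. \<Sum>\<xi>\<in>?Sn. t ^ k / fact k * Qpow V Vs c r k \<eta>0 \<xi> * ?F \<xi>)"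
      by (rule suminf_sum[symmetric]) (rule summable_mult2[OF summ[OF eta0]])
    also have "\<dots> = (\<Sum>k. t ^ k / fact k * Tk V Vs c r k ?F \<eta>0)"
      unfolding Tk_def sum_eta0 by (simp add: sum_distrib_left mult.assoc)
    also have "\<dots> = (\<Sum>k. \<Sum>I\<in>?II. t ^ k / fact k * Qpow V Vs c r k (phi (nths xs I)) \<zeta>)"
      unfolding TkF by (simp add: sum_distrib_left)
    also have "\<dots> = (\<Sum>I\<in>?II. \<Sum>k. t ^ k / fact k * Qpow V Vs c r k (phi (nths xs I)) \<zeta>)"
      by (rule suminf_sum) (rule summ[OF phiI])
    finally show ?thesis unfolding trans_prob_def .
  qed
  have lim: "\<exists>L. ((\<lambda>t. trans_prob V Vs c r t (phi (nths xs I)) \<zeta>) \<longlongrightarrow> L) at_top" if I: "I \<in> ?II" for I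
  proof -
    have eq: "trans_prob V Vs c r t (phi (nths xs I)) \<zeta> = Pt ?Q ?Sm t (phi (nths xs I)) \<zeta>" for t
      unfolding trans_prob_def Pt_def by (simp add: Qpow_mpow[OF phiI[OF I]])
    have "\<exists>L. ((\<lambda>t. Pt ?Q ?Sm t (phi (nths xs I)) \<zeta>) \<longlongrightarrow> L) at_top"
    proof (rule Pt_limit[OF finSm phiI[OF I] zSm])
      show "\<And>x. x \<in> ?Sm \<Longrightarrow> (\<Sum>y\<in>?Sm. ?Q x y) = 0" by (rule rate_rowsum[OF fin sub])
      show "\<And>x y. x \<in> ?Sm \<Longrightarrow> y \<in> ?Sm \<Longrightarrow> x \<noteq> y \<Longrightarrow> 0 \<le> ?Q x y"
        by (rule rate_offdiag[of Vs V c r, OF fin sub c_nonneg r_nonneg]) auto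
      show "?Q \<zeta> \<zeta> = 0" unfolding rate_def by (rule rate_absorb[OF fin sub zeta])
    qed
    then show ?thesis unfolding eq .
  qed
  then obtain L where L: "\<And>I. I \<in> ?II \<Longrightarrow> ((\<lambda>t. trans_prob V Vs c r t (phi (nths xs I)) \<zeta>) \<longlongrightarrow> L I) at_top"
    by metis
  have "((\<lambda>t. expect_t V Vs c r t \<eta>0 ?F) \<longlongrightarrow> (\<Sum>I\<in>?II. L I)) at_top"
    unfolding fin_t by (rule tendsto_sum) (rule L)
  then have "expect_inf V Vs c r \<eta>0 ?F = (\<Sum>I\<in>?II. L I)"
    unfolding expect_inf_def by (rule tendsto_Lim[rotated]) simp
  also have "\<dots> = (\<Sum>I\<in>?II. prob_inf V Vs c r (phi (nths xs I)) \<zeta>)"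
    unfolding prob_inf_def by (rule sum.cong[OF refl]) (rule tendsto_Lim[OF _ L, symmetric], simp_all)
  finally show ?thesis unfolding \<eta>0_def n_def .
qed

end
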